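(* Let $g(x)=\sin(x)^2$. For positive integers $m,n$, let $p=\gcd(m,n)$, $\mu=\pi/n$ and $\tilde{G}(m,n)=\frac{1}{\pi}\int_{-\pi/2}^{\pi/2}\prod_{i=0}^{n-1} g(x+mi\mu)\,dx$. Then $$\tilde{G}(m,n)=\frac{2^{p}\,(2p-1)!!}{4^n\, p!}.$$
   Context: $(2p-1)!!=1\cdot3\cdots(2p-1)$ denotes the double factorial. *)

theory Defs
  imports "HOL-Analysis.Analysis"
begin

text \<open>Odd double factorial: (2p-1)!! = 1 * 3 * ... * (2p-1); empty product for p = 0.\<close>
definition odd_double_fact :: "nat \<Rightarrow> nat" where
  "odd_double_fact p = (\<Prod>k\<in>{1..p}. 2 * k - 1)"

definition g :: "real \<Rightarrow> real" where
  "g x = (sin x)^2"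

definition Gtilde :: "nat \<Rightarrow> nat \<Rightarrow> real" where
  "Gtilde m n = (1 / pi) * integral {-pi/2..pi/2}
      (\<lambda>x. \<Prod>i<n. g (x + real m * real i * (pi / real n)))"

end

theory Submission imports Defs "HOL-Computational_Algebra.Fundamental_Theorem_Algebra" begin

lemma roots_unity_prod:
  fixes N :: nat and z :: complex
  assumes "N > 0"
  shows "z ^ N - 1 = (\<Prod>j<N. z - exp(2 * of_real pi * \<i> * of_nat j / of_nat N))"
proof -
  define P :: "complex poly" where "P = monom 1 N - 1"
  have pP: "poly P w = w ^ N - 1" for w by (simp add: P_def poly_monom)
  have lc: "lead_coeff P = 1"
  proof -
    have P: "P = -1 + monom 1 N" by (simp add: P_def)
    have "degree (-1 :: complex poly) < degree (monom (1::complex) N)"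
      using assms by (simp add: degree_monom_eq)
    from lead_coeff_add_le[OF this] have "lead_coeff (-1 + monom (1::complex) N) = 1"
      by (simp only: lead_coeff_monom)
    then show ?thesis by (simp only: P)
  qed
  have rs: "rsquarefree P"
    unfolding rsquarefree_roots
  proof (intro allI notI)
    fix a assume h: "poly P a = 0 \<and> poly (pderiv P) a = 0"
    have "poly (pderiv P) a = of_nat N * a ^ (N - 1)"
      by (simp add: P_def pderiv_diff pderiv_monom poly_monom)
    with h assms have "a = 0" by simp
    with h pP assms show False by (simp add: zero_power)
  qed
  have "smult (lead_coeff P) (\<Prod>w|poly P w = 0. [:-w, 1:]) = P"
    by (rule complex_poly_decompose_rsquarefree[OF rs])
  hence "P = (\<Prod>w|w ^ N = 1. [:-w, 1:])" using lc by (simp add: pP)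
  hence "poly P z = poly (\<Prod>w|w ^ N = 1. [:-w, 1:]) z" by simp
  hence "z ^ N - 1 = (\<Prod>w|w ^ N = 1. z - w)"
    by (simp add: pP poly_prod)
  also have "\<dots> = (\<Prod>j<N. z - exp(2 * of_real pi * \<i> * of_nat j / of_nat N))"
  proof -
    have "(\<Prod>j<N. z - exp(2 * of_real pi * \<i> * of_nat j / of_nat N)) =
          (\<Prod>w\<in>{exp(2 * of_real pi * \<i> * of_nat j / of_nat N) | j. j < N}. z - w)"
      by (rule prod.reindex_bij_betw[OF bij_betw_roots_unity])
    also have "{exp(2 * of_real pi * \<i> * of_nat j / of_nat N) | j. j < N} = {w. w ^ N = 1}"
      using complex_roots_unity[of N] assms by simp
    finally show ?thesis by simp
  qed
  finally show ?thesis .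
qed

lemma cmod_cis_diff_sq: "cmod (cis t - cis s) ^ 2 = 4 * sin ((t - s) / 2) ^ 2"
proof -
  have "cmod (cis t - cis s) ^ 2 = (cos t - cos s)^2 + (sin t - sin s)^2"
    by (simp add: cmod_power2)
  also have "\<dots> = 2 - 2 * cos (t - s)"
    by (simp add: power2_eq_square cos_diff algebra_simps)
  also have "cos (t - s) = cos (2 * ((t - s)/2))" by (rule arg_cong[where f=cos]) simp
  also have "\<dots> = 1 - 2 * sin ((t - s)/2) ^ 2" by (rule cos_double_sin)
  finally show ?thesis by simp
qed

lemma sin_prod_sq:
  fixes N :: nat and x :: real
  assumes "N > 0"
  shows "(\<Prod>j<N. sin (x + real j * pi / real N) ^ 2) = sin (real N * x) ^ 2 / 4 ^ (N - 1)"
proof -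
  define y where "y = - x"
  define z where "z = cis (2 * y)"
  have "z ^ N - 1 = (\<Prod>j<N. z - exp(2 * of_real pi * \<i> * of_nat j / of_nat N))"
    by (rule roots_unity_prod[OF assms])
  also have "\<dots> = (\<Prod>j<N. z - cis (2 * pi * real j / real N))"
    by (intro prod.cong refl) (simp add: cis_conv_exp mult_ac)
  moreover have "z ^ N = cis (2 * real N * y)" unfolding z_def by (rule trans[OF Complex.DeMoivre]) (simp add: mult_ac)
  ultimately have eq: "cis (2 * real N * y) - cis 0 = (\<Prod>j<N. cis (2 * y) - cis (2 * pi * real j / real N))"
    by (simp add: z_def)
  have "cmod (cis (2 * real N * y) - cis 0) ^ 2 = (\<Prod>j<N. cmod (cis (2 * y) - cis (2 * pi * real j / real N)) ^ 2)"
    unfolding eq by (simp add: prod_norm[symmetric] prod_power_distrib)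
  hence "4 * sin (real N * y) ^ 2 = (\<Prod>j<N. 4 * sin (y - pi * real j / real N) ^ 2)"
    unfolding cmod_cis_diff_sq by (simp add: algebra_simps add_divide_distrib diff_divide_distrib)
  also have "\<dots> = 4 ^ N * (\<Prod>j<N. sin (x + real j * pi / real N) ^ 2)"
  proof -
    have "sin (y - pi * real j / real N) ^ 2 = sin (x + real j * pi / real N) ^ 2" for j
    proof -
      have "y - pi * real j / real N = - (x + real j * pi / real N)" by (simp add: y_def)
      thus ?thesis by (simp only: sin_minus) simp
    qed
    thus ?thesis by (simp add: prod.distrib)
  qed
  finally have "4 * sin (real N * x) ^ 2 = 4 ^ N * (\<Prod>j<N. sin (x + real j * pi / real N) ^ 2)"
    by (simp add: y_def)
  moreover have "(4::real) ^ N = 4 * 4 ^ (N - 1)" using assms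
    by (metis Suc_diff_1 power_Suc)
  ultimately show ?thesis by (simp add: field_simps)
qed

lemma sin_int_rec:
  fixes N k :: nat
  assumes "N > 0"
  defines "I \<equiv> \<lambda>k. integral {-pi/2..pi/2} (\<lambda>x. sin (real N * x) ^ k)"
  shows "I (k + 2) = (real k + 1) / (real k + 2) * I k"
proof -
  define F where "F = (\<lambda>x. sin (real N * x) ^ (k+1) * cos (real N * x))"
  define F' where "F' = (\<lambda>x. real N * ((real k + 1) * sin (real N * x) ^ k - (real k + 2) * sin (real N * x) ^ (k + 2)))"
  have der: "(F has_real_derivative F' x) (at x)" for x
  proof -
    have ds: "((\<lambda>x. sin (real N * x)) has_real_derivative cos (real N * x) * real N) (at x)"
      by (auto intro!: derivative_eq_intros)
    have d1: "((\<lambda>x. sin (real N * x) ^ (k+1)) has_real_derivative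
        real (k+1) * (cos (real N * x) * real N * sin (real N * x) ^ k)) (at x)"
      using DERIV_power[OF ds, of "k+1"] by simp
    have dc: "((\<lambda>x. cos (real N * x)) has_real_derivative - sin (real N * x) * real N) (at x)"
      by (auto intro!: derivative_eq_intros)
    have "(F has_real_derivative
        real (k+1) * (cos (real N * x) * real N * sin (real N * x) ^ k) * cos (real N * x)
        + (- sin (real N * x) * real N) * sin (real N * x) ^ (k+1)) (at x)"
      unfolding F_def by (rule DERIV_mult[OF d1 dc])
    moreover have "real (k+1) * (cos (real N * x) * real N * sin (real N * x) ^ k) * cos (real N * x)
        + (- sin (real N * x) * real N) * sin (real N * x) ^ (k+1) = F' x"
    proof -
      have c: "cos (real N * x) * cos (real N * x) = 1 - sin (real N * x) ^ 2"
        by (simp add: cos_squared_eq power2_eq_square[symmetric])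
      have "real (k+1) * (cos (real N * x) * real N * sin (real N * x) ^ k) * cos (real N * x)
          = real (k+1) * real N * sin (real N * x) ^ k * (cos (real N * x) * cos (real N * x))"
        by (simp add: algebra_simps)
      also have "\<dots> = real (k+1) * real N * sin (real N * x) ^ k * (1 - sin (real N * x) ^ 2)"
        by (simp only: c)
      finally show ?thesis unfolding F'_def
        by (simp add: algebra_simps power2_eq_square)
    qed
    ultimately show ?thesis by simp
  qed
  have "(F' has_integral (F (pi/2) - F (-pi/2))) {-pi/2..pi/2}"
    by (rule fundamental_theorem_of_calculus) (auto intro: has_real_derivative_iff_has_vector_derivative[THEN iffD1, OF der] has_vector_derivative_at_within)
  moreover have "F (pi/2) = 0" "F (-pi/2) = 0"
  proof -
    have sc: "sin (real N * (pi/2)) * cos (real N * (pi/2)) = 0"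
      using sin_double[of "real N * (pi/2)"] by simp
    show "F (pi/2) = 0" unfolding F_def using sc by auto
    show "F (-pi/2) = 0" unfolding F_def using sc by auto
  qed
  ultimately have h0: "(F' has_integral 0) {-pi/2..pi/2}" by simp
  have int: "(\<lambda>x. sin (real N * x) ^ j) integrable_on {-pi/2..pi/2}" for j
    by (intro integrable_continuous_interval continuous_intros)
  have "(F' has_integral real N * ((real k + 1) * I k - (real k + 2) * I (k + 2))) {-pi/2..pi/2}"
    unfolding F'_def I_def
    by (intro has_integral_mult_right has_integral_diff integrable_integral int)
  with h0 have "real N * ((real k + 1) * I k - (real k + 2) * I (k + 2)) = 0"
    using has_integral_unique by blast
  with assms(1) have "(real k + 2) * I (k + 2) = (real k + 1) * I k" by simp
  then show ?thesis by (simp add: field_simps)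
qed

lemma sin_int_even:
  fixes N p :: nat
  assumes "N > 0"
  shows "integral {-pi/2..pi/2} (\<lambda>x. sin (real N * x) ^ (2*p)) = pi * fact (2*p) / (4^p * fact p ^ 2)"
proof (induction p)
  case 0
  then show ?case by simp
next
  case (Suc p)
  have "integral {-pi/2..pi/2} (\<lambda>x. sin (real N * x) ^ (2*Suc p))
      = integral {-pi/2..pi/2} (\<lambda>x. sin (real N * x) ^ (2*p + 2))" by simp
  also have "\<dots> = (real (2*p) + 1) / (real (2*p) + 2) * integral {-pi/2..pi/2} (\<lambda>x. sin (real N * x) ^ (2*p))"
    using sin_int_rec[OF assms, of "2*p"] by simp
  also have "\<dots> = (real (2*p) + 1) / (real (2*p) + 2) * (pi * fact (2*p) / (4^p * fact p ^ 2))"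
    using Suc by simp
  also have "\<dots> = pi * fact (2*Suc p) / (4^Suc p * fact (Suc p) ^ 2)"
  proof -
    have e1: "fact (2*Suc p) = (2*real p+2)*(2*real p+1)*(fact (2*p)::real)"
      by (simp add: fact_Suc algebra_simps)
    have e2: "fact (Suc p) = (real p+1)*(fact p::real)" by (simp add: fact_Suc)
    have nz: "(2*real p + 2) \<noteq> 0" "real p + 1 \<noteq> 0" "(fact p :: real) \<noteq> 0" "(4::real)^p \<noteq> 0" by auto
    show ?thesis unfolding e1 e2 using nz
      by (simp add: divide_simps power2_eq_square) (simp add: algebra_simps)
  qed
  finally show ?case .
qed

lemma fact_double_odf: "fact (2*p) = 2^p * fact p * (\<Prod>k\<in>{1..p}. 2 * k - 1 :: nat)"
proof (induction p)
  case 0 then show ?case by simp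
next
  case (Suc p)
  have "fact (2 * Suc p) = (2*p+2) * (2*p+1) * (fact (2*p) :: nat)"
    by (simp add: fact_Suc algebra_simps)
  also have "\<dots> = 2 ^ Suc p * fact (Suc p) * ((\<Prod>k\<in>{1..p}. 2 * k - 1) * (2 * Suc p - 1))"
    using Suc by (simp add: fact_Suc algebra_simps)
  also have "(\<Prod>k\<in>{1..p}. 2 * k - 1) * (2 * Suc p - 1) = (\<Prod>k\<in>{1..Suc p}. 2 * k - 1 :: nat)"
    by (simp add: prod.nat_ivl_Suc')
  finally show ?case .
qed

lemma bij_mult_mod:
  fixes a N :: nat
  assumes "coprime a N" "N > 0"
  shows "bij_betw (\<lambda>i. a * i mod N) {..<N} {..<N}"
proof -
  have inj: "inj_on (\<lambda>i. a * i mod N) {..<N}"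
  proof (rule inj_onI)
    have *: "i = j" if "i \<le> j" "j < N" "a * i mod N = a * j mod N" for i j
    proof -
      have "N dvd a * j - a * i" using that mod_eq_dvd_iff_nat[of "a*i" "a*j" N] by simp
      hence "N dvd a * (j - i)" by (simp add: right_diff_distrib')
      hence "N dvd j - i" using assms(1) by (metis coprime_commute coprime_dvd_mult_right_iff)
      moreover have "j - i < N" using that by linarith
      ultimately have "j - i = 0" by (metis dvd_imp_le neq0_conv not_le)
      thus ?thesis using that by simp
    qed
    fix i j assume "i \<in> {..<N}" "j \<in> {..<N}" "a * i mod N = a * j mod N"
    thus "i = j" using *[of i j] *[of j i] by (cases "i \<le> j") auto
  qed
  have "(\<lambda>i. a * i mod N) ` {..<N} = {..<N}"
    by (rule endo_inj_surj) (use inj assms in auto)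
  with inj show ?thesis by (simp add: bij_betw_def)
qed

lemma prod_mod_reindex:
  fixes a N p :: nat and h :: "nat \<Rightarrow> 'b::comm_monoid_mult"
  assumes "coprime a N" "N > 0"
  shows "(\<Prod>i<p*N. h (a * i mod N)) = (\<Prod>r<N. h r) ^ p"
proof (induction p)
  case 0 then show ?case by simp
next
  case (Suc p)
  have "(\<Prod>i<Suc p*N. h (a * i mod N)) = (\<Prod>i<p*N. h (a * i mod N)) * (\<Prod>i\<in>{p*N..<p*N+N}. h (a * i mod N))"
    by (simp add: prod.atLeastLessThan_concat[symmetric] atLeast0LessThan[symmetric] add.commute)
  also have "(\<Prod>i\<in>{p*N..<p*N+N}. h (a * i mod N)) = (\<Prod>i<N. h (a * i mod N))"
  proof -
    have "(\<Prod>i\<in>{p*N..<p*N+N}. h (a * i mod N)) = (\<Prod>i\<in>{0..<N}. h (a * (i + p*N) mod N))"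
      using prod.shift_bounds_nat_ivl[of "\<lambda>i. h (a * i mod N)" 0 "p*N" N] by (simp add: add.commute)
    also have "\<dots> = (\<Prod>i<N. h (a * i mod N))"
      by (simp add: atLeast0LessThan distrib_left mult.assoc[symmetric])
    finally show ?thesis .
  qed
  also have "\<dots> = (\<Prod>r<N. h r)"
    using prod.reindex_bij_betw[OF bij_mult_mod[OF assms], of h] .
  finally show ?case using Suc by (simp add: mult.commute)
qed

lemma sin_sq_shift_npi: "sin (y + real q * pi) ^ 2 = sin y ^ 2"
  by (cases "even q") (auto simp: sin_add power_mult_distrib)

theorem lemma5p1:
  fixes m n :: nat
  assumes "m > 0" and "n > 0"
  shows "Gtilde m n =
    (2 ^ gcd m n * real (odd_double_fact (gcd m n))) / (4 ^ n * fact (gcd m n))"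
proof -
  define p where "p = gcd m n"
  define n' where "n' = n div p"
  define m' where "m' = m div p"
  have p0: "p > 0" using assms by (simp add: p_def)
  have nn: "n = p * n'" by (simp add: n'_def p_def)
  have mm: "m = p * m'" by (simp add: m'_def p_def)
  have n'0: "n' > 0" using nn assms by (cases "n' = 0") auto
  have cop: "coprime m' n'" unfolding m'_def n'_def p_def
    using assms by (intro div_gcd_coprime) auto
  have pn: "p \<le> n" using nn n'0 by simp
  define c :: real where "c = 1 / 4 ^ ((n' - 1) * p)"
  have prod_eq: "(\<Prod>i<n. g (x + real m * real i * (pi / real n))) = c * sin (real n' * x) ^ (2 * p)" for x
  proof -
    have "g (x + real m * real i * (pi / real n)) = sin (x + real (m' * i mod n') * pi / real n') ^ 2" for i
    proof -
      have "real m * real i * (pi / real n) = real (m' * i) * pi / real n'"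
        using p0 by (simp add: mm nn)
      also have "real (m' * i) = real ((m' * i) div n') * real n' + real (m' * i mod n')"
        by (metis div_mult_mod_eq of_nat_add of_nat_mult)
      finally have "x + real m * real i * (pi / real n) = (x + real (m' * i mod n') * pi / real n') + real ((m' * i) div n') * pi"
        using n'0 by (simp add: field_simps)
      thus ?thesis unfolding g_def by (simp only: sin_sq_shift_npi)
    qed
    hence "(\<Prod>i<n. g (x + real m * real i * (pi / real n))) = (\<Prod>i<p*n'. (\<lambda>r. sin (x + real r * pi / real n') ^ 2) (m' * i mod n'))"
      by (simp add: nn)
    also have "\<dots> = (\<Prod>r<n'. sin (x + real r * pi / real n') ^ 2) ^ p"
      by (rule prod_mod_reindex[OF cop n'0])
    also have "\<dots> = (sin (real n' * x) ^ 2 / 4 ^ (n' - 1)) ^ p"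
      by (simp only: sin_prod_sq[OF n'0])
    also have "\<dots> = c * sin (real n' * x) ^ (2 * p)"
      by (simp add: c_def power_divide power_mult)
    finally show ?thesis .
  qed
  have "Gtilde m n = 1 / pi * integral {-pi/2..pi/2} (\<lambda>x. c * sin (real n' * x) ^ (2 * p))"
    unfolding Gtilde_def by (simp only: prod_eq)
  also have "\<dots> = 1 / pi * (c * integral {-pi/2..pi/2} (\<lambda>x. sin (real n' * x) ^ (2 * p)))"
    by (simp only: integral_mult_right)
  also have "\<dots> = 1 / pi * (c * (pi * fact (2*p) / (4^p * fact p ^ 2)))"
    by (simp only: sin_int_even[OF n'0])
  also have "\<dots> = c * fact (2*p) / (4^p * fact p ^ 2)"
    by simp
  also have "fact (2*p) = (2^p * fact p * real (odd_double_fact p) :: real)"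
    using fact_double_odf[of p] unfolding odd_double_fact_def
    by (metis (mono_tags, lifting) of_nat_fact of_nat_mult of_nat_numeral of_nat_power)
  also have "c = 1 / 4 ^ (n - p)"
    by (simp add: c_def nn algebra_simps)
  also have "(1 / 4 ^ (n - p)) * (2 ^ p * fact p * real (odd_double_fact p)) / (4 ^ p * fact p ^ 2)
      = (2 ^ p * real (odd_double_fact p)) / (4 ^ n * (fact p :: real))"
  proof -
    have "(4::real) ^ n = 4 ^ (n - p) * 4 ^ p" using pn by (simp add: power_add[symmetric])
    thus ?thesis by (simp add: field_simps power2_eq_square)
  qed
  finally show ?thesis by (simp add: p_def)
qed
end
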